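(* Let $\widehat{X}=(\widehat{X}(t))_{t\in[0,1]}$ and $\widehat{Y}=(\widehat{Y}(t))_{t\in[0,1]}$ be independent one-dimensional standard Brownian bridges on $[0,1]$ (Gaussian processes with $\widehat{X}(0)=\widehat{X}(1)=0$, mean zero and $\mathrm{Cov}(\widehat{X}(s),\widehat{X}(t))=s(1-t)$ for $0\le s<t\le 1$), and let $\mu$ be a probability density function supported on $[0,1]$. Define $M_0(t)=\int_0^t\mu(s)\,ds$, $M_1(t)=\int_0^t M_0(s)\,ds$, $M_2(t)=\int_0^t M_1(s)\,ds$. Then the average radius of gyration of the two-dimensional tracked Brownian bridge $(\widehat{X}(t),\widehat{Y}(t))_{t\in\widetilde S}$ in the limit $c\to\infty$, namely $$r^2:=2\,\mathbb{E}\left[\int_0^1 \widehat{X}(t)^2\mu(t)\,dt\right],$$ satisfies $$r^2=2M_1(1)-4M_2(1).$$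
   Context: Tracking setup: $S$ is a non-homogeneous Poisson point process on $[0,1]$ with intensity $\lambda(t)=c\mu(t)$, $c>0$, and $\widetilde S=S\cup\{0,1\}$; the tracked bridge is the set of observed locations $(\widehat{X}(t),\widehat{Y}(t))$, $t\in\widetilde S$. Its gyration tensor about the tether point $(0,0)$ has entries $T_{11}=\frac{1}{2+|S|}\sum_{t\in S}\widehat X(t)^2$, $T_{22}=\frac{1}{2+|S|}\sum_{t\in S}\widehat Y(t)^2$, $T_{12}=\frac{1}{2+|S|}\sum_{t\in S}\widehat X(t)\widehat Y(t)$, and its radius of gyration is $T_{11}+T_{22}$. As $c\to\infty$ these entries are replaced by $\int_0^1\widehat X(t)^2\mu(t)dt$, $\int_0^1\widehat Y(t)^2\mu(t)dt$, $\int_0^1\widehat X(t)\widehat Y(t)\mu(t)dt$, and the limiting average radius of gyration is defined to be $r^2=2\mathbb{E}[\int_0^1\widehat X(t)^2\mu(t)dt]$. *)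

theory Defs
  imports "HOL-Probability.Probability"
begin

definition gaussian_rv :: "'a measure \<Rightarrow> ('a \<Rightarrow> real) \<Rightarrow> bool" where
  "gaussian_rv M Z \<longleftrightarrow> Z \<in> borel_measurable M \<and>
     ((\<exists>m \<sigma>. \<sigma> > 0 \<and> distributed M lborel Z (normal_density m \<sigma>))
      \<or> (\<exists>c. AE \<omega> in M. Z \<omega> = c))"

definition std_brownian_bridge :: "'a measure \<Rightarrow> (real \<Rightarrow> 'a \<Rightarrow> real) \<Rightarrow> bool" where
  "std_brownian_bridge M X \<longleftrightarrow>
     (\<forall>t\<in>{0..1}. X t \<in> borel_measurable M) \<and>
     (\<forall>T c. finite T \<and> T \<subseteq> {0..1} \<longrightarrow>
        gaussian_rv M (\<lambda>\<omega>. \<Sum>t\<in>T. c t * X t \<omega>)) \<and>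
     (\<forall>t\<in>{0..1}. (\<integral>\<omega>. X t \<omega> \<partial>M) = 0) \<and>
     (\<forall>s\<in>{0..1}. \<forall>t\<in>{0..1}. s \<le> t \<longrightarrow>
        (\<integral>\<omega>. X s \<omega> * X t \<omega> \<partial>M) - (\<integral>\<omega>. X s \<omega> \<partial>M) * (\<integral>\<omega>. X t \<omega> \<partial>M)
          = s * (1 - t)) \<and>
     (AE \<omega> in M. X 0 \<omega> = 0 \<and> X 1 \<omega> = 0) \<and>
     (\<forall>\<omega>\<in>space M. continuous_on {0..1} (\<lambda>t. X t \<omega>))"

definition prob_density_01 :: "(real \<Rightarrow> real) \<Rightarrow> bool" where
  "prob_density_01 \<mu> \<longleftrightarrow> \<mu> \<in> borel_measurable borel \<and> (\<forall>t. 0 \<le> \<mu> t) \<and>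
     (\<forall>t. t \<notin> {0..1} \<longrightarrow> \<mu> t = 0) \<and> integrable lborel \<mu> \<and> (\<integral>t. \<mu> t \<partial>lborel) = 1"

definition M0 :: "(real \<Rightarrow> real) \<Rightarrow> real \<Rightarrow> real" where
  "M0 \<mu> t = (LBINT s=0..t. \<mu> s)"

definition M1 :: "(real \<Rightarrow> real) \<Rightarrow> real \<Rightarrow> real" where
  "M1 \<mu> t = (LBINT s=0..t. M0 \<mu> s)"

definition M2 :: "(real \<Rightarrow> real) \<Rightarrow> real \<Rightarrow> real" where
  "M2 \<mu> t = (LBINT s=0..t. M1 \<mu> s)"

end

theory Submission
  imports Defs
begin

lemma LBINT_nn:
  fixes a b :: real
  assumes "(\<lambda>x. indicator {a<..<b} x * f x) \<in> borel_measurable borel"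
    "\<And>x. a<x \<Longrightarrow> x<b \<Longrightarrow> 0 \<le> f x" "a \<le> b"
  shows "(LBINT x=a..b. f x) = enn2real (\<integral>\<^sup>+x. ennreal (indicator {a<..<b} x * f x) \<partial>lborel)"
proof -
  have "(LBINT x=a..b. f x) = integral\<^sup>L lborel (\<lambda>x. indicator {a<..<b} x * f x)"
    using assms(3) by (simp add: interval_lebesgue_integral_def set_lebesgue_integral_def)
  also have "\<dots> = enn2real (\<integral>\<^sup>+x. ennreal (indicator {a<..<b} x * f x) \<partial>lborel)"
    by (rule integral_eq_nn_integral) (use assms in \<open>auto simp: indicator_def\<close>)
  finally show ?thesis .
qed

lemma LBINT_nn01:
  assumes "(\<lambda>x. indicator {0<..<1} x * f x) \<in> borel_measurable borel"
    "\<And>x. 0<x \<Longrightarrow> x<1 \<Longrightarrow> 0 \<le> f x"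
  shows "(LBINT x=0..1. f x) = enn2real (\<integral>\<^sup>+x. ennreal (indicator {0<..<1::real} x * f x) \<partial>lborel)"
  using LBINT_nn[of 0 1 f] assms by (simp add: zero_ereal_def one_ereal_def)

lemma LBINT_nn0:
  fixes b :: real
  assumes "(\<lambda>x. indicator {0<..<b} x * f x) \<in> borel_measurable borel"
    "\<And>x. 0<x \<Longrightarrow> x<b \<Longrightarrow> 0 \<le> f x" "0 \<le> b"
  shows "(LBINT x=0..b. f x) = enn2real (\<integral>\<^sup>+x. ennreal (indicator {0<..<b} x * f x) \<partial>lborel)"
  using LBINT_nn[of 0 b f] assms by (simp add: zero_ereal_def)

lemma LBINT_nn1:
  fixes a :: real
  assumes "(\<lambda>x. indicator {a<..<1} x * f x) \<in> borel_measurable borel"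
    "\<And>x. a<x \<Longrightarrow> x<1 \<Longrightarrow> 0 \<le> f x" "a \<le> 1"
  shows "(LBINT x=a..1. f x) = enn2real (\<integral>\<^sup>+x. ennreal (indicator {a<..<1} x * f x) \<partial>lborel)"
  using LBINT_nn[of a 1 f] assms by (simp add: one_ereal_def)

lemma meas_LBINTa[measurable]:
  fixes a :: real
  assumes [measurable]: "f \<in> borel_measurable borel"
  shows "(\<lambda>s::real. LBINT u=a..s. f u) \<in> borel_measurable borel"
proof -
  have e: "(\<lambda>s::real. LBINT u=a..s. f u) = (\<lambda>s. if a \<le> s then (\<integral>u. (if a < u \<and> u < s then f u else 0) \<partial>lborel)
       else - (\<integral>u. (if s < u \<and> u < a then f u else 0) \<partial>lborel))"
    by (auto simp: interval_lebesgue_integral_def set_lebesgue_integral_def indicator_def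
        intro!: ext Bochner_Integration.integral_cong)
  show ?thesis unfolding e by measurable
qed

lemma meas_LBINT1[measurable]:
  fixes b :: real
  assumes [measurable]: "f \<in> borel_measurable borel"
  shows "(\<lambda>s::real. LBINT u=s..b. f u) \<in> borel_measurable borel"
proof -
  have "(\<lambda>s::real. LBINT u=s..b. f u) = (\<lambda>s::real. - (LBINT u=b..s. f u))"
    by (rule ext, rule interval_integral_endpoints_reverse)
  then show ?thesis by simp
qed

lemma LBINT_nonneg:
  fixes a b :: real and f :: "real \<Rightarrow> real"
  assumes "a \<le> b" "\<And>x. a<x \<Longrightarrow> x<b \<Longrightarrow> 0 \<le> f x"
  shows "0 \<le> (LBINT x=a..b. f x)"
proof -
  have "0 \<le> integral\<^sup>L lborel (\<lambda>x. indicator {a<..<b} x *\<^sub>R f x)"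
    by (rule integral_nonneg_AE, rule AE_I2) (use assms in \<open>auto simp: indicator_def\<close>)
  then show ?thesis using assms(1)
    by (simp add: interval_lebesgue_integral_def set_lebesgue_integral_def)
qed

lemma meas_LBINT0[measurable]:
  assumes [measurable]: "f \<in> borel_measurable borel"
  shows "(\<lambda>s::real. LBINT u=0..s. f u) \<in> borel_measurable borel"
  using meas_LBINTa[OF assms, of 0] by (simp add: zero_ereal_def)

lemma meas_LBINT1'[measurable]:
  assumes [measurable]: "f \<in> borel_measurable borel"
  shows "(\<lambda>s::real. LBINT u=s..1. f u) \<in> borel_measurable borel"
  using meas_LBINT1[OF assms, of 1] by (simp add: one_ereal_def)

lemma fub:
  fixes f g :: "real \<Rightarrow> real"
  assumes f[measurable]: "f \<in> borel_measurable borel" and g[measurable]: "g \<in> borel_measurable borel"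
  and f0: "\<And>x. 0<x \<Longrightarrow> x<1 \<Longrightarrow> 0 \<le> f x" and g0: "\<And>x. 0<x \<Longrightarrow> x<1 \<Longrightarrow> 0 \<le> g x"
  and g1: "\<And>x. 0<x \<Longrightarrow> x<1 \<Longrightarrow> g x \<le> 1"
  and fin: "(\<integral>\<^sup>+x. ennreal (indicator {0<..<1} x * f x) \<partial>lborel) \<noteq> \<infinity>"
  shows "(LBINT s=0..1. g s * (LBINT u=0..s. f u)) = (LBINT u=0..1. f u * (LBINT s=u..1. g s))"
proof -
  define H where "H s u = ennreal (if 0 < u \<and> u < s \<and> s < 1 then g s * f u else 0)" for s u
  have Hm[measurable]: "(\<lambda>(s,u). H s u) \<in> borel_measurable (lborel \<Otimes>\<^sub>M lborel)"
    unfolding H_def by measurable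
  have A: "ennreal (indicator {0<..<1} s * (g s * (LBINT u=0..s. f u))) = (\<integral>\<^sup>+u. H s u \<partial>lborel)" for s
  proof (cases "0 < s \<and> s < 1")
    case False
    then have "\<And>v. H s v = 0" by (auto simp: H_def)
    then show ?thesis using False by auto
  next
    case True
    define K where "K = (\<integral>\<^sup>+u. ennreal (indicator {0<..<s} u * f u) \<partial>lborel)"
    have Ki: "(LBINT u=0..s. f u) = enn2real K"
      unfolding K_def by (rule LBINT_nn0) (use True f0 in auto)
    have "K \<le> (\<integral>\<^sup>+x. ennreal (indicator {0<..<1} x * f x) \<partial>lborel)"
      unfolding K_def using True f0 by (intro nn_integral_mono) (auto simp: indicator_def)
    then have Kf: "K \<noteq> \<infinity>" using fin by (auto simp: top_unique)
    have "(\<integral>\<^sup>+u. H s u \<partial>lborel) = (\<integral>\<^sup>+u. ennreal (g s) * ennreal (indicator {0<..<s} u * f u) \<partial>lborel)"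
      using True f0 g0 by (intro nn_integral_cong) (auto simp: H_def indicator_def ennreal_mult')
    also have "\<dots> = ennreal (g s) * K"
      unfolding K_def by (rule nn_integral_cmult) measurable
    also have "\<dots> = ennreal (g s * enn2real K)"
      using Kf True g0 by (simp add: ennreal_mult ennreal_enn2real_if)
    finally show ?thesis using True Ki by simp
  qed
  have B: "ennreal (indicator {0<..<1} u * (f u * (LBINT s=u..1. g s))) = (\<integral>\<^sup>+s. H s u \<partial>lborel)" for u
  proof (cases "0 < u \<and> u < 1")
    case False
    then have "\<And>v. H v u = 0" by (auto simp: H_def)
    then show ?thesis using False by auto
  next
    case True
    define L where "L = (\<integral>\<^sup>+s. ennreal (indicator {u<..<1} s * g s) \<partial>lborel)"
    have Li: "(LBINT s=u..1. g s) = enn2real L"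
      unfolding L_def by (rule LBINT_nn1) (use True g0 in auto)
    have "L \<le> (\<integral>\<^sup>+x. indicator {u<..<1} x \<partial>lborel)"
      unfolding L_def using True g1 by (intro nn_integral_mono) (auto simp: indicator_def)
    also have "\<dots> = ennreal (1 - u)" using True by simp
    finally have Lf: "L \<noteq> \<infinity>" by (auto simp: top_unique)
    have "(\<integral>\<^sup>+s. H s u \<partial>lborel) = (\<integral>\<^sup>+s. ennreal (f u) * ennreal (indicator {u<..<1} s * g s) \<partial>lborel)"
      using True f0 g0 by (intro nn_integral_cong) (auto simp: H_def indicator_def ennreal_mult' mult.commute)
    also have "\<dots> = ennreal (f u) * L"
      unfolding L_def by (rule nn_integral_cmult) measurable
    also have "\<dots> = ennreal (f u * enn2real L)"
      using Lf True f0 by (simp add: ennreal_mult ennreal_enn2real_if)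
    finally show ?thesis using True Li by simp
  qed
  have "(LBINT s=0..1. g s * (LBINT u=0..s. f u))
      = enn2real (\<integral>\<^sup>+s. ennreal (indicator {0<..<1} s * (g s * (LBINT u=0..s. f u))) \<partial>lborel)"
  proof (rule LBINT_nn01)
    fix x :: real assume x: "0 < x" "x < 1"
    have "0 \<le> (LBINT u=(0::real)..x. f u)" by (rule LBINT_nonneg) (use x f0 in auto)
    then show "0 \<le> g x * (LBINT u=0..x. f u)"
      using g0 x by (simp add: zero_ereal_def)
  qed measurable
  also have "\<dots> = enn2real (\<integral>\<^sup>+s. \<integral>\<^sup>+u. H s u \<partial>lborel \<partial>lborel)"
    using A by simp
  also have "\<dots> = enn2real (\<integral>\<^sup>+u. \<integral>\<^sup>+s. H s u \<partial>lborel \<partial>lborel)"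
    using lborel_pair.Fubini'[OF Hm] by simp
  also have "\<dots> = enn2real (\<integral>\<^sup>+u. ennreal (indicator {0<..<1} u * (f u * (LBINT s=u..1. g s))) \<partial>lborel)"
    using B by simp
  also have "\<dots> = (LBINT u=0..1. f u * (LBINT s=u..1. g s))"
  proof (rule LBINT_nn01[symmetric])
    show "\<And>x. 0 < x \<Longrightarrow> x < 1 \<Longrightarrow> 0 \<le> f x * (LBINT s=x..1. g s)"
      using g0 f0 LBINT_nonneg[of _ 1 g] by (simp add: one_ereal_def)
    show "(\<lambda>x. indicator {0<..<1} x * (f x * (LBINT s=x..1. g s))) \<in> borel_measurable borel"
      by measurable
  qed
  finally show ?thesis .
qed

lemma calc_part:
  assumes "prob_density_01 \<mu>"
  shows "2 * (LBINT t=0..1. \<mu> t * (t * (1 - t))) = 2 * M1 \<mu> 1 - 4 * M2 \<mu> 1"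
proof -
  have mm[measurable]: "\<mu> \<in> borel_measurable borel" and m0: "\<And>t. 0 \<le> \<mu> t"
    and mi: "integrable lborel \<mu>" and m1: "(\<integral>t. \<mu> t \<partial>lborel) = 1"
    using assms by (auto simp: prob_density_01_def)
  have nn1: "(\<integral>\<^sup>+x. ennreal (\<mu> x) \<partial>lborel) = 1"
    using nn_integral_eq_integral[OF mi] m0 m1 by simp
  have Kle: "(\<integral>\<^sup>+x. ennreal (indicator S x * \<mu> x) \<partial>lborel) \<le> 1" for S
  proof -
    have "(\<integral>\<^sup>+x. ennreal (indicator S x * \<mu> x) \<partial>lborel) \<le> (\<integral>\<^sup>+x. ennreal (\<mu> x) \<partial>lborel)"
      using m0 by (intro nn_integral_mono) (auto simp: indicator_def)
    then show ?thesis using nn1 by simp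
  qed
  have finmu: "(\<integral>\<^sup>+x. ennreal (indicator {0<..<1} x * \<mu> x) \<partial>lborel) \<noteq> \<infinity>"
    using Kle[of "{0<..<1}"] by (auto simp: top_unique)
  have M0m[measurable]: "M0 \<mu> \<in> borel_measurable borel"
    unfolding M0_def[abs_def] by measurable
  have M0b: "0 \<le> M0 \<mu> s \<and> M0 \<mu> s \<le> 1" if "0 < s" for s :: real
  proof -
    have "M0 \<mu> s = enn2real (\<integral>\<^sup>+x. ennreal (indicator {0<..<s} x * \<mu> x) \<partial>lborel)"
      unfolding M0_def by (rule LBINT_nn0) (use that m0 in auto)
    moreover have "enn2real (\<integral>\<^sup>+x. ennreal (indicator {0<..<s} x * \<mu> x) \<partial>lborel) \<le> 1"
      using Kle[of "{0<..<s}"] by (simp add: enn2real_leI)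
    ultimately show ?thesis by simp
  qed
  have finM0: "(\<integral>\<^sup>+x. ennreal (indicator {0<..<1} x * M0 \<mu> x) \<partial>lborel) \<noteq> \<infinity>"
  proof -
    have "(\<integral>\<^sup>+x. ennreal (indicator {0<..<1} x * M0 \<mu> x) \<partial>lborel) \<le> (\<integral>\<^sup>+x. indicator {0<..<1::real} x \<partial>lborel)"
      using M0b by (intro nn_integral_mono) (auto simp: indicator_def)
    then show ?thesis by (auto simp: top_unique)
  qed
  have c1: "(LBINT s=u..1. (1::real)) = 1 - u" for u :: real
    using interval_integral_const(2)[of 1 u 1] by (simp add: one_ereal_def)
  have c2: "(LBINT s=u..1. (1 - s)) = (1 - u)^2 / 2" if "u \<le> 1" for u :: real
  proof -
    have "(LBINT s=u..(1::real). (1 - s)) = (\<lambda>s. -((1 - s)^2/2)) 1 - (\<lambda>s. -((1 - s)^2/2)) u"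
    proof (rule interval_integral_FTC_finite[where F="\<lambda>s. -((1 - s)^2/2)"])
      show "continuous_on {min u 1..max u 1} (\<lambda>s. 1 - s)" by (intro continuous_intros)
      fix x :: real
      have "((\<lambda>s. -((1 - s)^2/2)) has_real_derivative (1 - x)) (at x within {min u 1..max u 1})"
        by (auto intro!: derivative_eq_intros simp: field_simps)
      then show "((\<lambda>s. -((1 - s)^2/2)) has_vector_derivative (1 - x)) (at x within {min u 1..max u 1})"
        by (simp add: has_real_derivative_iff_has_vector_derivative)
    qed
    then show ?thesis by (simp add: one_ereal_def)
  qed
  have a: "M1 \<mu> 1 = (LBINT u=0..1. \<mu> u * (1 - u))"
  proof -
    have "M1 \<mu> 1 = (LBINT s=0..1. 1 * (LBINT u=0..s. \<mu> u))"
      by (simp add: M1_def M0_def one_ereal_def[symmetric])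
    also have "\<dots> = (LBINT u=0..1. \<mu> u * (LBINT s=u..1. 1))"
      by (rule fub) (use m0 finmu in auto)
    also have "\<dots> = (LBINT u=0..1. \<mu> u * (1 - u))"
      using c1 by (simp add: one_ereal_def)
    finally show ?thesis .
  qed
  have b: "M2 \<mu> 1 = (LBINT u=0..1. M0 \<mu> u * (1 - u))"
  proof -
    have "M2 \<mu> 1 = (LBINT s=0..1. 1 * (LBINT u=0..s. M0 \<mu> u))"
      by (simp add: M2_def M1_def[abs_def] one_ereal_def[symmetric])
    also have "\<dots> = (LBINT u=0..1. M0 \<mu> u * (LBINT s=u..1. 1))"
      by (rule fub) (use M0b finM0 in auto)
    also have "\<dots> = (LBINT u=0..1. M0 \<mu> u * (1 - u))"
      using c1 by (simp add: one_ereal_def)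
    finally show ?thesis .
  qed
  have c: "(LBINT u=0..1. M0 \<mu> u * (1 - u)) = (LBINT u=0..1. \<mu> u * ((1 - u)^2 / 2))"
  proof -
    have "(LBINT u=0..1. M0 \<mu> u * (1 - u)) = (LBINT s=0..1. (1 - s) * (LBINT u=0..s. \<mu> u))"
      by (simp add: M0_def mult.commute)
    also have "\<dots> = (LBINT u=0..1. \<mu> u * (LBINT s=u..1. (1 - s)))"
      by (rule fub) (use m0 finmu in auto)
    also have "\<dots> = (LBINT u=0..1. \<mu> u * ((1 - u)^2 / 2))"
      by (rule interval_integral_cong) (use c2 in \<open>auto simp: einterval_def one_ereal_def\<close>)
    finally show ?thesis .
  qed
  have integ: "interval_lebesgue_integrable lborel 0 1 (\<lambda>x. \<mu> x * h x)"
    if [measurable]: "h \<in> borel_measurable borel" and hb: "\<And>x. 0 < x \<Longrightarrow> x < 1 \<Longrightarrow> \<bar>h x\<bar> \<le> 1" for h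
    unfolding interval_lebesgue_integrable_def set_integrable_def
  proof (simp add: zero_ereal_def one_ereal_def, rule Bochner_Integration.integrable_bound[OF mi])
    show "(\<lambda>x. indicator {0<..<1} x * (\<mu> x * h x)) \<in> borel_measurable lborel" by measurable
    show "AE x in lborel. norm (indicator {0<..<1::real} x * (\<mu> x * h x)) \<le> norm (\<mu> x)"
    proof (rule AE_I2)
      fix x :: real
      show "norm (indicator {0<..<1::real} x * (\<mu> x * h x)) \<le> norm (\<mu> x)"
        using hb[of x] m0[of x] by (auto simp: indicator_def abs_mult intro: mult_left_le)
    qed
  qed
  have "(LBINT t=0..1. \<mu> t * (t * (1 - t))) = (LBINT t=0..1. \<mu> t * (1 - t) - 2 * (\<mu> t * ((1 - t)^2 / 2)))"
    by (rule interval_integral_cong) (simp add: field_simps power2_eq_square)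
  also have "\<dots> = (LBINT t=0..1. \<mu> t * (1 - t)) - (LBINT t=0..1. 2 * (\<mu> t * ((1 - t)^2 / 2)))"
    by (rule interval_lebesgue_integral_diff(2)) (auto intro!: integ simp: power_le_one abs_le_iff power2_eq_square mult_le_one)
  finally show ?thesis using a b c by simp
qed

lemma joint_meas:
  fixes X :: "real \<Rightarrow> 'a \<Rightarrow> real"
  assumes Xm: "\<And>t. t \<in> {0..1} \<Longrightarrow> X t \<in> borel_measurable M"
  and Xc: "\<And>\<omega>. \<omega> \<in> space M \<Longrightarrow> continuous_on {0..1} (\<lambda>t. X t \<omega>)"
  shows "(\<lambda>p. if snd p \<in> {0..1} then X (snd p) (fst p) else 0) \<in> borel_measurable (M \<Otimes>\<^sub>M lborel)"
proof -
  define Xs where "Xs s = (if s \<in> {0..1} then X s else (\<lambda>_. 0))" for s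
  have Xsm[measurable]: "Xs s \<in> borel_measurable M" for s
    using Xm by (auto simp: Xs_def)
  define r where "r n t = real (nat \<lfloor>t * real (Suc n)\<rfloor>) / real (Suc n)" for n t
  define u where "u n p = (if snd p \<in> {0..1} then (\<Sum>k\<le>Suc n. if real k \<le> snd p * real (Suc n) \<and> snd p * real (Suc n) < real k + 1
      then Xs (real k / real (Suc n)) (fst p) else 0) else 0)" for n p
  have um: "u n \<in> borel_measurable (M \<Otimes>\<^sub>M lborel)" for n
    unfolding u_def by measurable
  have ueq: "u n p = X (r n (snd p)) (fst p)" if "snd p \<in> {0..1}" for n p
  proof -
    define y where "y = snd p * real (Suc n)"
    have y0: "0 \<le> y" using that by (auto simp: y_def)
    have yle: "y \<le> real (Suc n)" using that by (auto simp: y_def)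
    have iff: "(real k \<le> y \<and> y < real k + 1) \<longleftrightarrow> k = nat \<lfloor>y\<rfloor>" for k :: nat
    proof -
      have "(real k \<le> y \<and> y < real k + 1) \<longleftrightarrow> \<lfloor>y\<rfloor> = int k" by (simp add: floor_eq_iff)
      also have "\<dots> \<longleftrightarrow> k = nat \<lfloor>y\<rfloor>" using y0 by auto
      finally show ?thesis .
    qed
    have kin: "nat \<lfloor>y\<rfloor> \<le> Suc n"
    proof -
      have "\<lfloor>y\<rfloor> \<le> \<lfloor>real (Suc n)\<rfloor>" by (rule floor_mono[OF yle])
      then show ?thesis by simp
    qed
    have rin: "r n (snd p) \<in> {0..1}"
    proof -
      have "real (nat \<lfloor>y\<rfloor>) \<le> y" using y0 by simp
      then have "r n (snd p) \<le> snd p" using that by (simp add: r_def y_def divide_le_eq)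
      moreover have "0 \<le> r n (snd p)" by (simp add: r_def)
      ultimately show ?thesis using that by auto
    qed
    have "u n p = (\<Sum>k\<le>Suc n. if k = nat \<lfloor>y\<rfloor> then Xs (real k / real (Suc n)) (fst p) else 0)"
      unfolding u_def using that iff by (simp add: y_def)
    also have "\<dots> = Xs (real (nat \<lfloor>y\<rfloor>) / real (Suc n)) (fst p)"
      using kin by (simp only: sum.delta finite_atMost atMost_iff if_True)
    also have "\<dots> = X (r n (snd p)) (fst p)"
      using rin by (simp add: Xs_def r_def y_def)
    finally show ?thesis .
  qed
  have rconv: "(\<lambda>n. r n t) \<longlonglongrightarrow> t" and r01: "r n t \<in> {0..1}" if "t \<in> {0..1}" for t n
  proof -
    have b: "t - inverse (real (Suc n)) \<le> r n t \<and> r n t \<le> t" for n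
    proof -
      define y where "y = t * real (Suc n)"
      have y0: "0 \<le> y" using that by (auto simp: y_def)
      have e: "real (nat \<lfloor>y\<rfloor>) = of_int \<lfloor>y\<rfloor>" using y0 by simp
      have "y - 1 \<le> of_int \<lfloor>y\<rfloor>" "of_int \<lfloor>y\<rfloor> \<le> y" by linarith+
      note h = this
      have N: "0 < real (Suc n)" by simp
      have "t - inverse (real (Suc n)) = (y - 1) / real (Suc n)" using N by (simp add: y_def field_simps)
      also have "\<dots> \<le> of_int \<lfloor>y\<rfloor> / real (Suc n)" using h N by (intro divide_right_mono) auto
      finally have 1: "t - inverse (real (Suc n)) \<le> of_int \<lfloor>y\<rfloor> / real (Suc n)" .
      have "of_int \<lfloor>y\<rfloor> / real (Suc n) \<le> y / real (Suc n)" using h N by (intro divide_right_mono) auto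
      also have "\<dots> = t" using N by (simp add: y_def)
      finally show ?thesis using 1 unfolding r_def y_def[symmetric] e by simp
    qed
    have l: "(\<lambda>n. t - inverse (real (Suc n))) \<longlonglongrightarrow> t"
      using tendsto_diff[OF tendsto_const[of t] LIMSEQ_inverse_real_of_nat] by simp
    show "(\<lambda>n. r n t) \<longlonglongrightarrow> t"
      by (rule tendsto_sandwich[OF _ _ l tendsto_const]) (use b in \<open>simp_all add: always_eventually\<close>)
    have "0 \<le> r n t" by (simp add: r_def)
    then show "r n t \<in> {0..1}" using b[of n] that by auto
  qed
  show ?thesis
  proof (rule borel_measurable_LIMSEQ_real[OF _ um])
    fix p :: "'a \<times> real" assume p: "p \<in> space (M \<Otimes>\<^sub>M lborel)"
    show "(\<lambda>n. u n p) \<longlonglongrightarrow> (if snd p \<in> {0..1} then X (snd p) (fst p) else 0)"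
    proof (cases "snd p \<in> {0..1}")
      case True
      have "fst p \<in> space M" using p by (auto simp: space_pair_measure)
      have "(\<lambda>n. X (r n (snd p)) (fst p)) \<longlonglongrightarrow> X (snd p) (fst p)"
        by (rule continuous_on_tendsto_compose[OF Xc[OF \<open>fst p \<in> space M\<close>] rconv[OF True] True])
           (use r01[OF True] in auto)
      then show ?thesis using True ueq by simp
    next
      case False
      then have "\<And>n. u n p = 0" by (simp only: u_def False if_False)
      then show ?thesis using False by (simp only: if_False) simp
    qed
  qed
qed

theorem theorem1:
  fixes M :: "'a measure" and X Y :: "real \<Rightarrow> 'a \<Rightarrow> real" and \<mu> :: "real \<Rightarrow> real"
  assumes "prob_space M"
    and "std_brownian_bridge M X" and "std_brownian_bridge M Y"
    and "prob_space.indep_var M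
           (PiM {0..1} (\<lambda>_. borel)) (\<lambda>\<omega>. \<lambda>t\<in>{0..1}. X t \<omega>)
           (PiM {0..1} (\<lambda>_. borel)) (\<lambda>\<omega>. \<lambda>t\<in>{0..1}. Y t \<omega>)"
    and "prob_density_01 \<mu>"
  shows "2 * (\<integral>\<omega>. (LBINT t=0..1. (X t \<omega>)\<^sup>2 * \<mu> t) \<partial>M) = 2 * M1 \<mu> 1 - 4 * M2 \<mu> 1"
proof -
  interpret P: prob_space M by fact
  interpret PS: pair_sigma_finite M lborel
    by (simp add: pair_sigma_finite_def P.sigma_finite_measure_axioms lborel.sigma_finite_measure_axioms)
  have mm[measurable]: "\<mu> \<in> borel_measurable borel" and m0: "\<And>t. 0 \<le> \<mu> t"
    and mi: "integrable lborel \<mu>" and m1: "(\<integral>t. \<mu> t \<partial>lborel) = 1"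
    using assms(5) by (auto simp: prob_density_01_def)
  have nn1: "(\<integral>\<^sup>+x. ennreal (\<mu> x) \<partial>lborel) = 1"
    using nn_integral_eq_integral[OF mi] m0 m1 by simp
  have Xm: "\<And>t. t \<in> {0..1} \<Longrightarrow> X t \<in> borel_measurable M"
    and Xc: "\<And>\<omega>. \<omega> \<in> space M \<Longrightarrow> continuous_on {0..1} (\<lambda>t. X t \<omega>)"
    and Xmean: "\<And>t. t \<in> {0..1} \<Longrightarrow> (\<integral>\<omega>. X t \<omega> \<partial>M) = 0"
    and Xcov: "\<And>s t. s \<in> {0..1} \<Longrightarrow> t \<in> {0..1} \<Longrightarrow> s \<le> t \<Longrightarrow>
        (\<integral>\<omega>. X s \<omega> * X t \<omega> \<partial>M) - (\<integral>\<omega>. X s \<omega> \<partial>M) * (\<integral>\<omega>. X t \<omega> \<partial>M) = s * (1 - t)"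
    using assms(2) unfolding std_brownian_bridge_def by blast+
  define F where "F p = (if snd p \<in> {0..1} then X (snd p) (fst p) else 0)" for p
  have Fm[measurable]: "F \<in> borel_measurable (M \<Otimes>\<^sub>M lborel)"
    unfolding F_def by (rule joint_meas[OF Xm Xc])
  define G where "G p = ennreal (indicator {0<..<1} (snd p) * ((F p)\<^sup>2 * \<mu> (snd p)))" for p
  have Gm[measurable]: "G \<in> borel_measurable (M \<Otimes>\<^sub>M lborel)"
    unfolding G_def by measurable
  define N where "N \<omega> = (\<integral>\<^sup>+t. G (\<omega>, t) \<partial>lborel)" for \<omega>
  have Nm[measurable]: "N \<in> borel_measurable M"
    unfolding N_def using lborel.borel_measurable_nn_integral[of "\<lambda>\<omega> t. G (\<omega>, t)" M] Gm by simp
  have Phi: "(LBINT t=0..1. (X t \<omega>)\<^sup>2 * \<mu> t) = enn2real (N \<omega>)" if \<omega>: "\<omega> \<in> space M" for \<omega>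
  proof -
    have e: "indicator {0<..<1} t * ((X t \<omega>)\<^sup>2 * \<mu> t) = indicator {0<..<1} t * ((F (\<omega>, t))\<^sup>2 * \<mu> t)" for t :: real
      by (auto simp: F_def indicator_def)
    have "(LBINT t=0..1. (X t \<omega>)\<^sup>2 * \<mu> t) = enn2real (\<integral>\<^sup>+t. ennreal (indicator {0<..<1} t * ((X t \<omega>)\<^sup>2 * \<mu> t)) \<partial>lborel)"
    proof (rule LBINT_nn01)
      have "(\<lambda>t. F (\<omega>, t)) \<in> borel_measurable lborel"
        using measurable_Pair2[OF Fm \<omega>] .
      then have [measurable]: "(\<lambda>t. F (\<omega>, t)) \<in> borel_measurable borel" by simp
      show "(\<lambda>t. indicator {0<..<1} t * ((X t \<omega>)\<^sup>2 * \<mu> t)) \<in> borel_measurable borel"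
        unfolding e by measurable
    qed (use m0 in auto)
    also have "\<dots> = enn2real (N \<omega>)"
      unfolding N_def G_def e by simp
    finally show ?thesis .
  qed
  have sq: "(\<integral>\<^sup>+\<omega>. ennreal ((X t \<omega>)\<^sup>2) \<partial>M) = ennreal (t * (1 - t))" if t: "0 < t" "t < 1" for t :: real
  proof -
    have t01: "t \<in> {0..1}" using t by auto
    have I: "(\<integral>\<omega>. X t \<omega> * X t \<omega> \<partial>M) = t * (1 - t)"
      using Xcov[OF t01 t01] Xmean[OF t01] by simp
    have "t * (1 - t) \<noteq> 0" using t by simp
    then have int: "integrable M (\<lambda>\<omega>. X t \<omega> * X t \<omega>)"
      using I not_integrable_integral_eq by metis
    have "(\<integral>\<^sup>+\<omega>. ennreal ((X t \<omega>)\<^sup>2) \<partial>M) = (\<integral>\<^sup>+\<omega>. ennreal (X t \<omega> * X t \<omega>) \<partial>M)"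
      by (simp add: power2_eq_square)
    also have "\<dots> = ennreal (\<integral>\<omega>. X t \<omega> * X t \<omega> \<partial>M)"
      by (rule nn_integral_eq_integral[OF int]) simp
    finally show ?thesis using I by simp
  qed
  have inner: "(\<integral>\<^sup>+\<omega>. G (\<omega>, t) \<partial>M) = ennreal (indicator {0<..<1} t * (\<mu> t * (t * (1 - t))))" for t :: real
  proof (cases "0 < t \<and> t < 1")
    case True
    have "(\<integral>\<^sup>+\<omega>. G (\<omega>, t) \<partial>M) = (\<integral>\<^sup>+\<omega>. ennreal (\<mu> t) * ennreal ((X t \<omega>)\<^sup>2) \<partial>M)"
      using True m0 by (intro nn_integral_cong) (auto simp: G_def F_def ennreal_mult' mult.commute)
    also have "\<dots> = ennreal (\<mu> t) * ennreal (t * (1 - t))"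
      using True Xm[of t] by (subst nn_integral_cmult) (auto simp: sq)
    also have "\<dots> = ennreal (indicator {0<..<1} t * (\<mu> t * (t * (1 - t))))"
      using True m0 by (simp add: ennreal_mult')
    finally show ?thesis .
  next
    case False
    then have "\<And>\<omega>. G (\<omega>, t) = 0" using False by (auto simp: G_def indicator_def)
    moreover have "indicator {0<..<1} t = (0::real)" using False by (auto simp: indicator_def)
    ultimately show ?thesis by simp
  qed
  have total: "(\<integral>\<^sup>+\<omega>. N \<omega> \<partial>M) = (\<integral>\<^sup>+t. ennreal (indicator {0<..<1} t * (\<mu> t * (t * (1 - t)))) \<partial>lborel)"
    unfolding N_def using PS.Fubini'[of "\<lambda>\<omega> t. G (\<omega>, t)"] Gm inner by simp
  have totfin: "(\<integral>\<^sup>+t. ennreal (indicator {0<..<1} t * (\<mu> t * (t * (1 - t)))) \<partial>lborel) \<noteq> \<infinity>"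
  proof -
    have "(\<integral>\<^sup>+t. ennreal (indicator {0<..<1} t * (\<mu> t * (t * (1 - t)))) \<partial>lborel) \<le> (\<integral>\<^sup>+x. ennreal (\<mu> x) \<partial>lborel)"
    proof (intro nn_integral_mono)
      fix t :: real
      have "indicator {0<..<1} t * (\<mu> t * (t * (1 - t))) \<le> \<mu> t"
      proof (cases "0 < t \<and> t < 1")
        case True
        have "t * (1 - t) \<le> 1" using True by (intro mult_le_one) auto
        then have "\<mu> t * (t * (1 - t)) \<le> \<mu> t * 1" using m0 by (intro mult_left_mono) auto
        then show ?thesis using True by simp
      qed (use m0 in \<open>auto simp: indicator_def\<close>)
      then show "ennreal (indicator {0<..<1} t * (\<mu> t * (t * (1 - t)))) \<le> ennreal (\<mu> t)"
        by (rule ennreal_leI)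
    qed
    then show ?thesis using nn1 by (auto simp: top_unique)
  qed
  have AEfin: "AE \<omega> in M. N \<omega> \<noteq> \<infinity>"
    by (rule nn_integral_PInf_AE[OF Nm]) (use total totfin in simp)
  have "(\<integral>\<omega>. (LBINT t=0..1. (X t \<omega>)\<^sup>2 * \<mu> t) \<partial>M) = (\<integral>\<omega>. enn2real (N \<omega>) \<partial>M)"
    by (rule Bochner_Integration.integral_cong) (auto simp: Phi)
  also have "\<dots> = enn2real (\<integral>\<^sup>+\<omega>. ennreal (enn2real (N \<omega>)) \<partial>M)"
    by (rule integral_eq_nn_integral) auto
  also have "(\<integral>\<^sup>+\<omega>. ennreal (enn2real (N \<omega>)) \<partial>M) = (\<integral>\<^sup>+\<omega>. N \<omega> \<partial>M)"
    by (rule nn_integral_cong_AE) (use AEfin in \<open>auto simp: ennreal_enn2real_if\<close>)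
  also have "enn2real (\<integral>\<^sup>+\<omega>. N \<omega> \<partial>M) = (LBINT t=0..1. \<mu> t * (t * (1 - t)))"
    unfolding total by (rule LBINT_nn01[symmetric]) (use m0 in auto)
  finally show ?thesis using calc_part[OF assms(5)] by simp
qed

end
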